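(* Let $X=\{x_1,\dots,x_n\}$ be a set of Boolean variables and $\mathcal{C}=\{C_1,\dots,C_m\}$ a set of clauses, each consisting of exactly three positive literals. Let $G'$ be the graph constructed from $(\mathcal{C},X)$ as described in the context. Then there is a truth assignment for $X$ such that every clause contains at least one true literal and at least one false literal if and only if $G'$ has a $5$-colouring.
   Context: First construct $(G,L)$: for each $x_i\in X$ introduce two adjacent vertices $x_i$ and $\overline{x}_i$ with $L(x_i)=L(\overline{x}_i)=\{4,5\}$. For each clause $C_j$ introduce two vertices $C_j,C_j'$ with $L(C_j)=L(C_j')=\{1,2,3\}$. Add an edge between every vertex of the form $x_i$ or $\overline{x}_i$ and every vertex of the form $C_j$ or $C_j'$. For each clause $C_j$, fix an order of its literals, say $C_j=\{x_g,x_h,x_i\}$, and add six new vertices $a_{g,j},a_{h,j},a_{i,j},a'_{g,j},a'_{h,j},a'_{i,j}$ with edges $x_ga_{g,j}$, $a_{g,j}C_j$, $x_ha_{h,j}$, $a_{h,j}C_j$, $x_ia_{i,j}$, $a_{i,j}C_j$, $\overline{x}_ga'_{g,j}$, $a'_{g,j}C_j'$, $\overline{x}_ha'_{h,j}$, $a'_{h,j}C_j'$, $\overline{x}_ia'_{i,j}$, $a'_{i,j}C_j'$, and lists $L(a_{g,j})=L(a'_{g,j})=\{1,4\}$, $L(a_{h,j})=L(a'_{h,j})=\{2,4\}$, $L(a_{i,j})=L(a'_{i,j})=\{3,4\}$. Then $G'$ is obtained from $G$ by adding a clique on five new vertices $k_1,\dots,k_5$ and adding an edge between $k_\ell$ and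 a vertex $u\in V(G)$ if and only if $\ell\notin L(u)$. A $5$-colouring is a map from vertices to $\{1,\dots,5\}$ giving adjacent vertices distinct colours. *)

theory Defs
  imports Main
begin

text \<open>Xv i = x_i, Xn i = overline x_i, Cv j = C_j, Cp j = C_j',
  Av p j = a_{(p-th literal of C_j), j}, Ap p j = a'_{(p-th literal of C_j), j}
  (p in {1,2,3} is the position of the literal in the fixed order of C_j), Kv l = k_l.\<close>
datatype vtx = Xv nat | Xn nat | Cv nat | Cp nat | Av nat nat | Ap nat nat | Kv nat

text \<open>A clause C_j is given by the ordered triple cl j = (g,h,i) of its variable indices.
  lit cl j p is the variable index of the p-th literal of C_j.\<close>
definition lit :: "(nat \<Rightarrow> nat \<times> nat \<times> nat) \<Rightarrow> nat \<Rightarrow> nat \<Rightarrow> nat" where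
  "lit cl j p = (case cl j of (g, h, i) \<Rightarrow> if p = 1 then g else if p = 2 then h else i)"

definition G_verts :: "nat \<Rightarrow> nat \<Rightarrow> vtx set" where
  "G_verts n m =
     {Xv i | i. i \<in> {1..n}} \<union> {Xn i | i. i \<in> {1..n}} \<union>
     {Cv j | j. j \<in> {1..m}} \<union> {Cp j | j. j \<in> {1..m}} \<union>
     {Av p j | p j. p \<in> {1,2,3} \<and> j \<in> {1..m}} \<union>
     {Ap p j | p j. p \<in> {1,2,3} \<and> j \<in> {1..m}}"

definition Gp_verts :: "nat \<Rightarrow> nat \<Rightarrow> vtx set" where
  "Gp_verts n m = G_verts n m \<union> {Kv l | l. l \<in> {1..5}}"

fun Lst :: "vtx \<Rightarrow> nat set" where
  "Lst (Xv _) = {4,5}"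
| "Lst (Xn _) = {4,5}"
| "Lst (Cv _) = {1,2,3}"
| "Lst (Cp _) = {1,2,3}"
| "Lst (Av p _) = {p,4}"
| "Lst (Ap p _) = {p,4}"
| "Lst (Kv _) = {}"

definition G_edge0 :: "nat \<Rightarrow> nat \<Rightarrow> (nat \<Rightarrow> nat \<times> nat \<times> nat) \<Rightarrow> vtx \<Rightarrow> vtx \<Rightarrow> bool" where
  "G_edge0 n m cl u v \<longleftrightarrow>
     (\<exists>i\<in>{1..n}. u = Xv i \<and> v = Xn i)
   \<or> (\<exists>i\<in>{1..n}. \<exists>j\<in>{1..m}. u \<in> {Xv i, Xn i} \<and> v \<in> {Cv j, Cp j})
   \<or> (\<exists>j\<in>{1..m}. \<exists>p\<in>{1,2,3}.
        (u = Xv (lit cl j p) \<and> v = Av p j) \<or> (u = Av p j \<and> v = Cv j) \<or>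
        (u = Xn (lit cl j p) \<and> v = Ap p j) \<or> (u = Ap p j \<and> v = Cp j))"

definition G_edge :: "nat \<Rightarrow> nat \<Rightarrow> (nat \<Rightarrow> nat \<times> nat \<times> nat) \<Rightarrow> vtx \<Rightarrow> vtx \<Rightarrow> bool" where
  "G_edge n m cl u v \<longleftrightarrow> G_edge0 n m cl u v \<or> G_edge0 n m cl v u"

definition Gp_edge :: "nat \<Rightarrow> nat \<Rightarrow> (nat \<Rightarrow> nat \<times> nat \<times> nat) \<Rightarrow> vtx \<Rightarrow> vtx \<Rightarrow> bool" where
  "Gp_edge n m cl u v \<longleftrightarrow>
     G_edge n m cl u v
   \<or> (\<exists>l\<in>{1..5}. \<exists>l'\<in>{1..5}. l \<noteq> l' \<and> u = Kv l \<and> v = Kv l')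
   \<or> (\<exists>l\<in>{1..5}. \<exists>w\<in>G_verts n m. l \<notin> Lst w \<and>
        ((u = Kv l \<and> v = w) \<or> (u = w \<and> v = Kv l)))"

definition is_5_colouring :: "'v set \<Rightarrow> ('v \<Rightarrow> 'v \<Rightarrow> bool) \<Rightarrow> ('v \<Rightarrow> nat) \<Rightarrow> bool" where
  "is_5_colouring V E c \<longleftrightarrow>
     (\<forall>v\<in>V. c v \<in> {1..5}) \<and> (\<forall>u\<in>V. \<forall>v\<in>V. E u v \<longrightarrow> c u \<noteq> c v)"

end

theory Submission
  imports Defs
begin

fun col :: "(nat \<Rightarrow> bool) \<Rightarrow> (nat \<Rightarrow> nat) \<Rightarrow> (nat \<Rightarrow> nat) \<Rightarrow> vtx \<Rightarrow> nat" where
  "col \<tau> t f (Xv i) = (if \<tau> i then 5 else 4)"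
| "col \<tau> t f (Xn i) = (if \<tau> i then 4 else 5)"
| "col \<tau> t f (Cv j) = t j"
| "col \<tau> t f (Cp j) = f j"
| "col \<tau> t f (Av p j) = (if p = t j then 4 else p)"
| "col \<tau> t f (Ap p j) = (if p = f j then 4 else p)"
| "col \<tau> t f (Kv l) = l"

lemma lit_in:
  assumes "\<forall>j\<in>{1..m}. case cl j of (g, h, i) \<Rightarrow>
             g \<in> {1..n} \<and> h \<in> {1..n} \<and> i \<in> {1..n} \<and> distinct [g, h, i]"
    and "j \<in> {1..m}"
  shows "lit cl j p \<in> {1..n}"
proof -
  have "case cl j of (g, h, i) \<Rightarrow>
             g \<in> {1..n} \<and> h \<in> {1..n} \<and> i \<in> {1..n} \<and> distinct [g, h, i]"
    using bspec[OF assms(1) assms(2)] .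
  then show ?thesis by (cases "cl j") (auto simp: lit_def)
qed

lemma forward:
  assumes tf: "\<forall>j\<in>{1..m}. t j \<in> {1,2,3} \<and> \<tau> (lit cl j (t j)) \<and> f j \<in> {1,2,3} \<and> \<not> \<tau> (lit cl j (f j))"
  shows "is_5_colouring (Gp_verts n m) (Gp_edge n m cl) (col \<tau> t f)"
proof -
  have L: "col \<tau> t f w \<in> Lst w" if "w \<in> G_verts n m" for w
    using that tf by (auto simp: G_verts_def)
  have tf': "t j \<in> {1,2,3} \<and> f j \<in> {1,2,3}" if "j \<in> {1..m}" for j using tf that by blast
  have E: "col \<tau> t f u \<noteq> col \<tau> t f v" if "G_edge0 n m cl u v" for u v
    using that unfolding G_edge0_def
  proof (elim disjE bexE conjE)
    { fix i assume "u = Xv i" "v = Xn i" then show ?thesis by simp }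
    { fix i j assume "j \<in> {1..m}" "u \<in> {Xv i, Xn i}" "v \<in> {Cv j, Cp j}"
      then show ?thesis using tf'[of j] by (auto split: if_splits) }
    fix j p assume j: "j \<in> {1..m}" and p: "p \<in> {1,2,3::nat}"
    have tj: "t j \<in> {1,2,3}" "\<tau> (lit cl j (t j))" "f j \<in> {1,2,3}" "\<not> \<tau> (lit cl j (f j))"
      using tf j by auto
    { assume "u = Xv (lit cl j p)" "v = Av p j" then show ?thesis using tj p by auto }
    { assume "u = Av p j" "v = Cv j" then show ?thesis using tj p by auto }
    { assume "u = Xn (lit cl j p)" "v = Ap p j" then show ?thesis using tj p by auto }
    { assume "u = Ap p j" "v = Cp j" then show ?thesis using tj p by auto }
  qed
  show ?thesis
    unfolding is_5_colouring_def
  proof (intro conjI ballI impI)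
    fix v assume "v \<in> Gp_verts n m"
    then consider "v \<in> G_verts n m" | l where "l \<in> {1..5}" "v = Kv l"
      unfolding Gp_verts_def by blast
    then show "col \<tau> t f v \<in> {1..5}"
    proof cases
      case 1
      then have "col \<tau> t f v \<in> Lst v" by (rule L)
      moreover have "Lst v \<subseteq> {1..5}" using 1 by (auto simp: G_verts_def)
      ultimately show ?thesis by blast
    qed simp
  next
    fix u v assume "u \<in> Gp_verts n m" "v \<in> Gp_verts n m" "Gp_edge n m cl u v"
    then show "col \<tau> t f u \<noteq> col \<tau> t f v"
      unfolding Gp_edge_def G_edge_def using E L by fastforce
  qed
qed

lemma e_KK: "l\<in>{1..5} \<Longrightarrow> l'\<in>{1..5} \<Longrightarrow> l \<noteq> l' \<Longrightarrow> Gp_edge n m cl (Kv l) (Kv l')"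
  unfolding Gp_edge_def
  apply (rule disjI2, rule disjI1)
  apply (rule bexI[of _ l], rule bexI[of _ l'])
  by simp_all
lemma e_Kw: "l\<in>{1..5} \<Longrightarrow> w \<in> G_verts n m \<Longrightarrow> l \<notin> Lst w \<Longrightarrow> Gp_edge n m cl (Kv l) w"
  unfolding Gp_edge_def
  apply (rule disjI2, rule disjI2)
  apply (rule bexI[of _ l], rule bexI[of _ w])
  by simp_all
lemma e_XXn: "i\<in>{1..n} \<Longrightarrow> Gp_edge n m cl (Xv i) (Xn i)"
  unfolding Gp_edge_def G_edge_def G_edge0_def
  apply (rule disjI1, rule disjI1, rule disjI1)
  apply (rule bexI[of _ i])
  by simp_all
lemma e_AC: "j\<in>{1..m} \<Longrightarrow> p\<in>{1,2,3} \<Longrightarrow> Gp_edge n m cl (Av p j) (Cv j)"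
  unfolding Gp_edge_def G_edge_def G_edge0_def
  apply (rule disjI1, rule disjI1, rule disjI2, rule disjI2)
  apply (rule bexI[of _ j], rule bexI[of _ p])
  by simp_all
lemma e_ApCp: "j\<in>{1..m} \<Longrightarrow> p\<in>{1,2,3} \<Longrightarrow> Gp_edge n m cl (Ap p j) (Cp j)"
  unfolding Gp_edge_def G_edge_def G_edge0_def
  apply (rule disjI1, rule disjI1, rule disjI2, rule disjI2)
  apply (rule bexI[of _ j], rule bexI[of _ p])
  by simp_all
lemma e_XA: "j\<in>{1..m} \<Longrightarrow> p\<in>{1,2,3} \<Longrightarrow> Gp_edge n m cl (Xv (lit cl j p)) (Av p j)"
  unfolding Gp_edge_def G_edge_def G_edge0_def
  apply (rule disjI1, rule disjI1, rule disjI2, rule disjI2)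
  apply (rule bexI[of _ j], rule bexI[of _ p])
  by simp_all
lemma e_XnAp: "j\<in>{1..m} \<Longrightarrow> p\<in>{1,2,3} \<Longrightarrow> Gp_edge n m cl (Xn (lit cl j p)) (Ap p j)"
  unfolding Gp_edge_def G_edge_def G_edge0_def
  apply (rule disjI1, rule disjI1, rule disjI2, rule disjI2)
  apply (rule bexI[of _ j], rule bexI[of _ p])
  by simp_all

lemma mem_Xv: "i\<in>{1..n} \<Longrightarrow> Xv i \<in> G_verts n m" unfolding G_verts_def by blast
lemma mem_Xn: "i\<in>{1..n} \<Longrightarrow> Xn i \<in> G_verts n m" unfolding G_verts_def by blast
lemma mem_Cv: "j\<in>{1..m} \<Longrightarrow> Cv j \<in> G_verts n m" unfolding G_verts_def by blast
lemma mem_Cp: "j\<in>{1..m} \<Longrightarrow> Cp j \<in> G_verts n m" unfolding G_verts_def by blast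
lemma mem_Av: "p\<in>{1,2,3} \<Longrightarrow> j\<in>{1..m} \<Longrightarrow> Av p j \<in> G_verts n m" unfolding G_verts_def by blast
lemma mem_Ap: "p\<in>{1,2,3} \<Longrightarrow> j\<in>{1..m} \<Longrightarrow> Ap p j \<in> G_verts n m" unfolding G_verts_def by blast

theorem lemma2:
  fixes n m :: nat and cl :: "nat \<Rightarrow> nat \<times> nat \<times> nat"
  assumes "\<forall>j\<in>{1..m}. case cl j of (g, h, i) \<Rightarrow>
             g \<in> {1..n} \<and> h \<in> {1..n} \<and> i \<in> {1..n} \<and> distinct [g, h, i]"
  shows "(\<exists>\<tau> :: nat \<Rightarrow> bool. \<forall>j\<in>{1..m}.
             (\<exists>p\<in>{1,2,3}. \<tau> (lit cl j p)) \<and> (\<exists>p\<in>{1,2,3}. \<not> \<tau> (lit cl j p)))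
         \<longleftrightarrow> (\<exists>c. is_5_colouring (Gp_verts n m) (Gp_edge n m cl) c)"
proof
  assume "\<exists>\<tau> :: nat \<Rightarrow> bool. \<forall>j\<in>{1..m}.
             (\<exists>p\<in>{1,2,3}. \<tau> (lit cl j p)) \<and> (\<exists>p\<in>{1,2,3}. \<not> \<tau> (lit cl j p))"
  then obtain \<tau> :: "nat \<Rightarrow> bool" where h: "\<forall>j\<in>{1..m}.
             (\<exists>p\<in>{1,2,3}. \<tau> (lit cl j p)) \<and> (\<exists>p\<in>{1,2,3}. \<not> \<tau> (lit cl j p))" by blast
  define t where "t j = (SOME p. p \<in> {1,2,3} \<and> \<tau> (lit cl j p))" for j
  define f where "f j = (SOME p. p \<in> {1,2,3} \<and> \<not> \<tau> (lit cl j p))" for j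
  have "\<forall>j\<in>{1..m}. t j \<in> {1,2,3} \<and> \<tau> (lit cl j (t j)) \<and> f j \<in> {1,2,3} \<and> \<not> \<tau> (lit cl j (f j))"
  proof
    fix j assume j: "j \<in> {1..m}"
    have a: "\<exists>p. p \<in> {1,2,3} \<and> \<tau> (lit cl j p)" using h j by blast
    have b: "\<exists>p. p \<in> {1,2,3} \<and> \<not> \<tau> (lit cl j p)" using h j by blast
    show "t j \<in> {1,2,3} \<and> \<tau> (lit cl j (t j)) \<and> f j \<in> {1,2,3} \<and> \<not> \<tau> (lit cl j (f j))"
      using someI_ex[OF a] someI_ex[OF b] unfolding t_def f_def by blast
  qed
  then show "\<exists>c. is_5_colouring (Gp_verts n m) (Gp_edge n m cl) c"
    using forward by blast
next
  assume "\<exists>c. is_5_colouring (Gp_verts n m) (Gp_edge n m cl) c"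
  then obtain c where c: "is_5_colouring (Gp_verts n m) (Gp_edge n m cl) c" by blast
  define \<sigma> where "\<sigma> l = c (Kv l)" for l
  have rng: "\<And>v. v \<in> Gp_verts n m \<Longrightarrow> c v \<in> {1..5}"
    and adj: "\<And>u v. u \<in> Gp_verts n m \<Longrightarrow> v \<in> Gp_verts n m \<Longrightarrow> Gp_edge n m cl u v \<Longrightarrow> c u \<noteq> c v"
    using c unfolding is_5_colouring_def by blast+
  have KV: "Kv l \<in> Gp_verts n m" if "l \<in> {1..5}" for l using that by (simp add: Gp_verts_def)
  have GV: "w \<in> Gp_verts n m" if "w \<in> G_verts n m" for w using that by (simp add: Gp_verts_def)
  have inj: "inj_on \<sigma> {1..5}"
  proof (rule inj_onI)
    fix x y assume "x \<in> {1..5::nat}" "y \<in> {1..5::nat}" "\<sigma> x = \<sigma> y"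
    then show "x = y" using adj[OF KV KV e_KK, of x y] unfolding \<sigma>_def by auto
  qed
  have img: "\<sigma> ` {1..5} = {1..5}"
  proof (rule card_subset_eq)
    show "\<sigma> ` {1..5} \<subseteq> {1..5}" using rng KV unfolding \<sigma>_def by auto
    show "card (\<sigma> ` {1..5}) = card {1..5::nat}" using card_image[OF inj] .
  qed simp
  have inL: "\<exists>l\<in>Lst w. c w = \<sigma> l" if w: "w \<in> G_verts n m" for w
  proof -
    have "c w \<in> \<sigma> ` {1..5}" using rng[OF GV[OF w]] img by simp
    then obtain l where l: "l \<in> {1..5}" "c w = \<sigma> l" by blast
    have "l \<in> Lst w"
    proof (rule ccontr)
      assume "l \<notin> Lst w"
      then have "Gp_edge n m cl (Kv l) w" using l w by (intro e_Kw)
      then show False using adj[OF KV[OF l(1)] GV[OF w]] l unfolding \<sigma>_def by simp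
    qed
    then show ?thesis using l by blast
  qed
  have sinj: "\<sigma> a = \<sigma> b \<longleftrightarrow> a = b" if "a \<in> {1..5}" "b \<in> {1..5}" for a b
    using inj that unfolding inj_on_def by blast
  define \<tau> where "\<tau> i = (c (Xv i) = \<sigma> 5)" for i
  have litn: "lit cl j p \<in> {1..n}" if "j \<in> {1..m}" for j p using lit_in[OF assms that] .
  have "\<forall>j\<in>{1..m}.
             (\<exists>p\<in>{1,2,3}. \<tau> (lit cl j p)) \<and> (\<exists>p\<in>{1,2,3}. \<not> \<tau> (lit cl j p))"
  proof
    fix j assume j: "j \<in> {1..m}"
    have vC: "Cv j \<in> G_verts n m" "Cp j \<in> G_verts n m" using j by (rule mem_Cv, rule mem_Cp)
    obtain q where q: "q \<in> {1,2,3}" "c (Cv j) = \<sigma> q" using inL[OF vC(1)] by auto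
    obtain q' where q': "q' \<in> {1,2,3}" "c (Cp j) = \<sigma> q'" using inL[OF vC(2)] by auto
    have vA: "Av q j \<in> G_verts n m" "Ap q' j \<in> G_verts n m"
      using mem_Av[OF q(1) j] mem_Ap[OF q'(1) j] by blast+
    have eA1: "Gp_edge n m cl (Av q j) (Cv j)" using j q(1) by (rule e_AC)
    have eA2: "Gp_edge n m cl (Ap q' j) (Cp j)" using j q'(1) by (rule e_ApCp)
    note eA = eA1 eA2
    have cA: "c (Av q j) = \<sigma> 4"
    proof -
      obtain l where "l \<in> {q,4}" "c (Av q j) = \<sigma> l" using inL[OF vA(1)] by auto
      moreover have "c (Av q j) \<noteq> c (Cv j)" using adj[OF GV[OF vA(1)] GV[OF vC(1)] eA(1)] .
      ultimately show ?thesis using q by auto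
    qed
    have cA': "c (Ap q' j) = \<sigma> 4"
    proof -
      obtain l where "l \<in> {q',4}" "c (Ap q' j) = \<sigma> l" using inL[OF vA(2)] by auto
      moreover have "c (Ap q' j) \<noteq> c (Cp j)" using adj[OF GV[OF vA(2)] GV[OF vC(2)] eA(2)] .
      ultimately show ?thesis using q' by auto
    qed
    define g where "g = lit cl j q"
    define g' where "g' = lit cl j q'"
    have gn: "g \<in> {1..n}" "g' \<in> {1..n}" using litn[OF j] unfolding g_def g'_def by auto
    have vX: "Xv g \<in> G_verts n m" "Xn g' \<in> G_verts n m" "Xv g' \<in> G_verts n m"
      using mem_Xv[OF gn(1)] mem_Xn[OF gn(2)] mem_Xv[OF gn(2)] by blast+
    have eX1: "Gp_edge n m cl (Xv g) (Av q j)" unfolding g_def using j q(1) by (rule e_XA)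
    have eX2: "Gp_edge n m cl (Xn g') (Ap q' j)" unfolding g'_def using j q'(1) by (rule e_XnAp)
    have eX3: "Gp_edge n m cl (Xv g') (Xn g')" using gn(2) by (rule e_XXn)
    note eX = eX1 eX2 eX3
    have "\<tau> g"
    proof -
      obtain l where "l \<in> {4,5}" "c (Xv g) = \<sigma> l" using inL[OF vX(1)] by auto
      moreover have "c (Xv g) \<noteq> c (Av q j)" using adj[OF GV[OF vX(1)] GV[OF vA(1)] eX(1)] .
      ultimately show ?thesis using cA unfolding \<tau>_def by auto
    qed
    moreover have "\<not> \<tau> g'"
    proof -
      obtain l where "l \<in> {4,5}" "c (Xn g') = \<sigma> l" using inL[OF vX(2)] by auto
      moreover have "c (Xn g') \<noteq> c (Ap q' j)" using adj[OF GV[OF vX(2)] GV[OF vA(2)] eX(2)] .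
      ultimately have "c (Xn g') = \<sigma> 5" using cA' by auto
      moreover have "c (Xv g') \<noteq> c (Xn g')" using adj[OF GV[OF vX(3)] GV[OF vX(2)] eX(3)] .
      ultimately show ?thesis unfolding \<tau>_def by auto
    qed
    ultimately show "(\<exists>p\<in>{1,2,3}. \<tau> (lit cl j p)) \<and> (\<exists>p\<in>{1,2,3}. \<not> \<tau> (lit cl j p))"
      using q q' unfolding g_def g'_def by blast
  qed
  then show "\<exists>\<tau> :: nat \<Rightarrow> bool. \<forall>j\<in>{1..m}.
             (\<exists>p\<in>{1,2,3}. \<tau> (lit cl j p)) \<and> (\<exists>p\<in>{1,2,3}. \<not> \<tau> (lit cl j p))" by blast
qed

end
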